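(* Let $q\ge2$, $r\ge1$, $\rho\ge2$, $s\ge1$ be integers, $N=r+\rho-1$ and $n=sN$. For $t=0,\dots,s-1$ let $\mathcal{R}_{t+1}=\{tN+1,\dots,(t+1)N\}$. Let $\mathcal{C}\subseteq Q^n$ ($|Q|=q$) be a code with minimum distance $d$ such that $\mathcal{C}|_{\mathcal{R}_i}$ has minimum distance at least $\rho$ for every $i=1,\dots,s$. Let $$T:=\{\mathbf{i}=(i_1,\dots,i_s)\mid i_1+\cdots+i_s\ge d,\ i_j\in\{0,\rho,\rho+1,\dots,N\}\text{ for all }j\}.$$ Then $$|\mathcal{C}|\le 1+\min\sum_{\mathbf{j}\in\{0,\dots,N\}^s\setminus\{\underline0\}}f_{\mathbf{j}}K^{(N)}_{\mathbf{j}}(\underline0),$$ where the minimum is over all real $(f_{\mathbf{j}})$ satisfying $f_{\mathbf{j}}\ge0$ for $\mathbf{j}\in\{0,\dots,N\}^s\setminus\{\underline0\}$ and $1+\sum_{\mathbf{j}\in\{0,\dots,N\}^s\setminus\{\underline0\}}f_{\mathbf{j}}K^{(N)}_{\mathbf{j}}(\mathbf{i})\le0$ for all $\mathbf{i}\in T$.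
   Context: The Krawtchouk polynomial is $K_j^{(N)}(x)=\sum_{l=0}^j(-1)^l(q-1)^{j-l}\binom xl\binom{N-x}{j-l}$, and for $\mathbf{j}=(j_1,\dots,j_s)$, $\mathbf{x}=(x_1,\dots,x_s)$, $K^{(N)}_{\mathbf{j}}(\mathbf{x})=\prod_{p=1}^sK^{(N)}_{j_p}(x_p)$; $\underline0=(0,\dots,0)$. Minimum distance refers to Hamming distance; $\mathcal{C}|_{\mathcal{R}_i}$ is the projection of $\mathcal{C}$ onto the coordinates in $\mathcal{R}_i$. *)

theory Defs
  imports Complex_Main
begin

text \<open>Words of length n over Q are lists; coordinates are 0-based, so the block
  R_{t+1} = {tN+1,...,(t+1)N} is the index range {t*N ..< (t+1)*N}.\<close>

definition hamming :: "'a list \<Rightarrow> 'a list \<Rightarrow> nat" where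
  "hamming x y = card {k. k < length x \<and> x ! k \<noteq> y ! k}"

definition min_dist :: "'a list set \<Rightarrow> nat" where
  "min_dist C = Min {hamming x y | x y. x \<in> C \<and> y \<in> C \<and> x \<noteq> y}"

definition min_dist_at_least :: "'a list set \<Rightarrow> nat \<Rightarrow> bool" where
  "min_dist_at_least C \<rho> \<longleftrightarrow> (\<forall>x\<in>C. \<forall>y\<in>C. x \<noteq> y \<longrightarrow> \<rho> \<le> hamming x y)"

definition proj_block :: "nat \<Rightarrow> nat \<Rightarrow> 'a list set \<Rightarrow> 'a list set" where
  "proj_block N t C = (\<lambda>x. take N (drop (t * N) x)) ` C"

definition krawtchouk :: "nat \<Rightarrow> nat \<Rightarrow> nat \<Rightarrow> nat \<Rightarrow> real" where
  "krawtchouk q N j x =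
     (\<Sum>l = 0..j. (-1) ^ l * (real q - 1) ^ (j - l) * real (x choose l) * real ((N - x) choose (j - l)))"

text \<open>Multi-indices in {0,...,N}^s, represented as functions nat => nat vanishing from s on.\<close>
definition multi_idx :: "nat \<Rightarrow> nat \<Rightarrow> (nat \<Rightarrow> nat) set" where
  "multi_idx s N = {j. (\<forall>t<s. j t \<le> N) \<and> (\<forall>t\<ge>s. j t = 0)}"

definition krawtchouk_multi :: "nat \<Rightarrow> nat \<Rightarrow> nat \<Rightarrow> (nat \<Rightarrow> nat) \<Rightarrow> (nat \<Rightarrow> nat) \<Rightarrow> real" where
  "krawtchouk_multi q N s j x = (\<Prod>p<s. krawtchouk q N (j p) (x p))"

definition T_set :: "nat \<Rightarrow> nat \<Rightarrow> nat \<Rightarrow> nat \<Rightarrow> (nat \<Rightarrow> nat) set" where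
  "T_set s N \<rho> d = {i \<in> multi_idx s N. (\<Sum>t<s. i t) \<ge> d \<and> (\<forall>t<s. i t = 0 \<or> \<rho> \<le> i t)}"

end

theory Submission
  imports Defs
begin

lemma kraw0: "krawtchouk q m 0 x = 1"
  by (simp add: krawtchouk_def)

lemma kraw_rec_eq:
  assumes "x \<le> m"
  shows "krawtchouk q (Suc m) (Suc j) x = krawtchouk q m (Suc j) x + (real q - 1) * krawtchouk q m j x"
proof -
  have e: "Suc m - x = Suc (m - x)" using assms by simp
  define n where "n = m - x"
  have "krawtchouk q (Suc m) (Suc j) x =
     (\<Sum>l = 0..j. (-1) ^ l * (real q - 1) ^ (Suc j - l) * real (x choose l) * real (Suc n choose (Suc j - l)))
     + (-1) ^ Suc j * real (x choose Suc j)"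
    unfolding krawtchouk_def e n_def[symmetric] by (simp add: sum.atLeast0_atMost_Suc)
  also have "(\<Sum>l = 0..j. (-1) ^ l * (real q - 1) ^ (Suc j - l) * real (x choose l) * real (Suc n choose (Suc j - l)))
     = (\<Sum>l = 0..j. (-1) ^ l * (real q - 1) ^ (Suc j - l) * real (x choose l) * real (n choose (Suc j - l)))
      + (real q - 1) * (\<Sum>l = 0..j. (-1) ^ l * (real q - 1) ^ (j - l) * real (x choose l) * real (n choose (j - l)))"
    unfolding sum_distrib_left sum.distrib[symmetric]
    by (rule sum.cong) (auto simp: Suc_diff_le algebra_simps)
  finally show ?thesis
    unfolding krawtchouk_def n_def by (simp add: sum.atLeast0_atMost_Suc algebra_simps)
qed

lemma kraw_rec_neq:
  assumes "x \<le> m"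
  shows "krawtchouk q (Suc m) (Suc j) (Suc x) = krawtchouk q m (Suc j) x - krawtchouk q m j x"
proof -
  define n where "n = m - x"
  have e: "Suc m - Suc x = n" using assms n_def by simp
  have "krawtchouk q (Suc m) (Suc j) (Suc x) =
     (real q - 1) ^ (Suc j) * real (n choose Suc j) +
     (\<Sum>l = 0..j. (-1) ^ Suc l * (real q - 1) ^ (j - l) * real (Suc x choose Suc l) * real (n choose (j - l)))"
    unfolding krawtchouk_def e by (subst sum.atLeast0_atMost_Suc_shift) (simp add: o_def del: sum.atLeast0_atMost_Suc)
  also have "(\<Sum>l = 0..j. (-1) ^ Suc l * (real q - 1) ^ (j - l) * real (Suc x choose Suc l) * real (n choose (j - l)))
    = (\<Sum>l = 0..j. (-1) ^ Suc l * (real q - 1) ^ (j - l) * real (x choose Suc l) * real (n choose (j - l)))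
      - (\<Sum>l = 0..j. (-1) ^ l * (real q - 1) ^ (j - l) * real (x choose l) * real (n choose (j - l)))"
    unfolding sum_subtractf[symmetric]
    by (rule sum.cong) (auto simp: algebra_simps)
  also have "(real q - 1) ^ (Suc j) * real (n choose Suc j) +
      (\<Sum>l = 0..j. (-1) ^ Suc l * (real q - 1) ^ (j - l) * real (x choose Suc l) * real (n choose (j - l)))
     = krawtchouk q m (Suc j) x"
    unfolding krawtchouk_def n_def[symmetric] by (subst sum.atLeast0_atMost_Suc_shift) (simp add: o_def del: sum.atLeast0_atMost_Suc)
  ultimately show ?thesis unfolding krawtchouk_def n_def by (simp add: algebra_simps)
qed

lemma hamming_Nil: "hamming [] y = 0" by (simp add: hamming_def)

lemma hamming_Cons: "hamming (a#u) (b#v) = hamming u v + (if a = b then 0 else 1)"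
proof -
  have "{k. k < length (a#u) \<and> (a#u) ! k \<noteq> (b#v) ! k} =
     (if a = b then {} else {0}) \<union> Suc ` {k. k < length u \<and> u ! k \<noteq> v ! k}"
    by (auto simp: image_iff less_Suc_eq_0_disj)
  moreover have "0 \<notin> Suc ` {k. k < length u \<and> u ! k \<noteq> v ! k}" by auto
  ultimately show ?thesis unfolding hamming_def
    by (simp add: card_image)
qed

lemma hamming_le: "hamming u v \<le> length u"
  unfolding hamming_def by (rule order.trans[OF card_mono[of "{..<length u}"]]) auto

lemma hamming_self: "hamming u u = 0" by (simp add: hamming_def)

lemma hamming_append: "length u = length u' \<Longrightarrow> hamming (u @ w) (u' @ w') = hamming u u' + hamming w w'"
proof (induction u arbitrary: u')
  case Nil then show ?case by (simp add: hamming_Nil)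
next
  case (Cons a u) then obtain b v where "u' = b # v" by (cases u') auto
  with Cons show ?case by (simp add: hamming_Cons)
qed

definition g :: "nat \<Rightarrow> 'a \<Rightarrow> 'a \<Rightarrow> real" where
  "g q a b = (if a = b then real q - 1 else -1)"

fun E :: "nat \<Rightarrow> nat \<Rightarrow> 'a list \<Rightarrow> 'a list \<Rightarrow> real" where
  "E q j [] v = (if j = 0 then 1 else 0)"
| "E q j (a#u) v = E q j u (tl v) + (case j of 0 \<Rightarrow> 0 | Suc j' \<Rightarrow> g q a (hd v) * E q j' u (tl v))"

lemma E_K: "length u = length v \<Longrightarrow> E q j u v = krawtchouk q (length u) j (hamming u v)"
proof (induction u arbitrary: v j)
  case Nil
  have "(\<Sum>l = 0..j'. (- 1) ^ l * (real q - 1) ^ (Suc j' - l) * real (0 choose l) * real (0 choose (Suc j' - l))) = 0" for j'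
    by (intro sum.neutral ballI) (case_tac x, simp_all)
  with Nil show ?case by (cases j) (auto simp: hamming_Nil krawtchouk_def)
next
  case (Cons a u)
  then obtain b w where v: "v = b # w" by (cases v) auto
  with Cons have l: "length u = length w" by simp
  have hl: "hamming u w \<le> length u" by (rule hamming_le)
  show ?case
  proof (cases j)
    case 0 then show ?thesis using Cons.IH l v by (simp add: kraw0)
  next
    case (Suc j')
    then show ?thesis using Cons.IH[OF l] v hl
      by (simp add: hamming_Cons g_def kraw_rec_eq kraw_rec_neq algebra_simps)
  qed
qed

definition psd_on :: "'b set \<Rightarrow> ('b \<Rightarrow> 'b \<Rightarrow> real) \<Rightarrow> bool" where
  "psd_on B K \<longleftrightarrow> (\<forall>A c. finite A \<longrightarrow> A \<subseteq> B \<longrightarrow> 0 \<le> (\<Sum>x\<in>A. \<Sum>y\<in>A. c x * c y * K x y))"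

lemma regroup:
  fixes c :: "'b \<Rightarrow> real" and K :: "'c \<Rightarrow> 'c \<Rightarrow> real" and f :: "'b \<Rightarrow> 'c"
  assumes "finite A"
  shows "(\<Sum>x\<in>A. \<Sum>y\<in>A. c x * c y * K (f x) (f y)) =
    (\<Sum>u\<in>f`A. \<Sum>v\<in>f`A. (\<Sum>x\<in>{x\<in>A. f x = u}. c x) * (\<Sum>y\<in>{y\<in>A. f y = v}. c y) * K u v)"
proof -
  have "(\<Sum>x\<in>A. \<Sum>y\<in>A. c x * c y * K (f x) (f y)) =
     (\<Sum>x\<in>A. \<Sum>v\<in>f`A. \<Sum>y\<in>{y\<in>A. f y = v}. c x * c y * K (f x) (f y))"
    by (rule sum.cong[OF refl], rule sum.image_gen[OF assms])
  also have "\<dots> = (\<Sum>x\<in>A. \<Sum>v\<in>f`A. c x * (\<Sum>y\<in>{y\<in>A. f y = v}. c y) * K (f x) v)"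
  proof (intro sum.cong refl)
    fix x v
    have "(\<Sum>y\<in>{y\<in>A. f y = v}. c x * c y * K (f x) (f y)) = (\<Sum>y\<in>{y\<in>A. f y = v}. c x * K (f x) v * c y)"
      by (rule sum.cong) (auto simp: ac_simps)
    also have "\<dots> = (c x * K (f x) v) * (\<Sum>y\<in>{y\<in>A. f y = v}. c y)"
      by (rule sum_distrib_left[symmetric])
    also have "\<dots> = c x * (\<Sum>y\<in>{y\<in>A. f y = v}. c y) * K (f x) v"
      by (simp only: ac_simps)
    finally show "(\<Sum>y\<in>{y\<in>A. f y = v}. c x * c y * K (f x) (f y)) = c x * (\<Sum>y\<in>{y\<in>A. f y = v}. c y) * K (f x) v" .
  qed
  also have "\<dots> = (\<Sum>u\<in>f`A. \<Sum>x\<in>{x\<in>A. f x = u}. \<Sum>v\<in>f`A. c x * (\<Sum>y\<in>{y\<in>A. f y = v}. c y) * K (f x) v)"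
    by (rule sum.image_gen[OF assms])
  also have "\<dots> = (\<Sum>u\<in>f`A. \<Sum>v\<in>f`A. (\<Sum>x\<in>{x\<in>A. f x = u}. c x) * (\<Sum>y\<in>{y\<in>A. f y = v}. c y) * K u v)"
  proof (intro sum.cong refl)
    fix u
    have "(\<Sum>x\<in>{x\<in>A. f x = u}. \<Sum>v\<in>f`A. c x * (\<Sum>y\<in>{y\<in>A. f y = v}. c y) * K (f x) v)
       = (\<Sum>v\<in>f`A. \<Sum>x\<in>{x\<in>A. f x = u}. c x * (\<Sum>y\<in>{y\<in>A. f y = v}. c y) * K u v)"
      by (subst sum.swap) (intro sum.cong refl, auto)
    also have "\<dots> = (\<Sum>v\<in>f`A. (\<Sum>x\<in>{x\<in>A. f x = u}. c x) * (\<Sum>y\<in>{y\<in>A. f y = v}. c y) * K u v)"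
      by (simp add: sum_distrib_right)
    finally show "(\<Sum>x\<in>{x\<in>A. f x = u}. \<Sum>v\<in>f`A. c x * (\<Sum>y\<in>{y\<in>A. f y = v}. c y) * K (f x) v)
       = (\<Sum>v\<in>f`A. (\<Sum>x\<in>{x\<in>A. f x = u}. c x) * (\<Sum>y\<in>{y\<in>A. f y = v}. c y) * K u v)" .
  qed
  finally show ?thesis .
qed

lemma psd_comp:
  assumes "psd_on B K" "finite A" "f ` A \<subseteq> B"
  shows "0 \<le> (\<Sum>x\<in>A. \<Sum>y\<in>A. c x * c y * K (f x) (f y))"
proof -
  have H: "\<And>A' c'. finite A' \<Longrightarrow> A' \<subseteq> B \<Longrightarrow> 0 \<le> (\<Sum>x\<in>A'. \<Sum>y\<in>A'. c' x * c' y * K x y)"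
    using assms(1) unfolding psd_on_def by blast
  show ?thesis unfolding regroup[OF assms(2)] by (rule H) (use assms in auto)
qed

lemma psd_const: "psd_on B (\<lambda>_ _. 1)"
  unfolding psd_on_def
proof (intro allI impI)
  fix A :: "'b set" and c :: "'b \<Rightarrow> real"
  have "(\<Sum>x\<in>A. \<Sum>y\<in>A. c x * c y * 1) = (\<Sum>x\<in>A. c x) * (\<Sum>x\<in>A. c x)"
    by (simp add: sum_product)
  then show "0 \<le> (\<Sum>x\<in>A. \<Sum>y\<in>A. c x * c y * 1)" by simp
qed

definition h :: "nat \<Rightarrow> 'a \<Rightarrow> 'a \<Rightarrow> real" where
  "h q a e = (if a = e then 1 else 0) - 1 / real q"

lemma g_feat:
  assumes "finite Q" "card Q = q" "q > 0" "a \<in> Q" "b \<in> Q"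
  shows "g q a b = real q * (\<Sum>e\<in>Q. h q a e * h q b e)"
proof -
  have "(\<Sum>e\<in>Q. h q a e * h q b e) =
     (\<Sum>e\<in>Q. (if a = e \<and> b = e then 1 else 0)) - (\<Sum>e\<in>Q. (if a = e then 1 else 0)) / real q
      - (\<Sum>e\<in>Q. (if b = e then 1 else 0)) / real q + (\<Sum>e\<in>Q. 1 / (real q * real q))"
    unfolding h_def by (simp add: algebra_simps sum.distrib sum_subtractf sum_divide_distrib)
       (rule sum.cong, auto)
  also have "\<dots> = (if a = b then 1 else 0) - 2 / real q + real q / (real q * real q)"
    using assms by (cases "a = b") (auto simp: sum.delta intro!: sum.neutral)
  finally have "1 + real q * (\<Sum>e\<in>Q. h q a e * h q b e) = real q * (if a = b then 1 else 0)"
    using assms by (simp add: field_simps)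
  then show ?thesis unfolding g_def by (cases "a = b") (simp_all add: algebra_simps)
qed


lemma E_step: "u \<noteq> [] \<Longrightarrow> E q j u v = E q j (tl u) (tl v) +
   (case j of 0 \<Rightarrow> 0 | Suc j' \<Rightarrow> g q (hd u) (hd v) * E q j' (tl u) (tl v))"
  by (cases u) (auto split: nat.split)

lemma E_psd:
  fixes Q :: "'a set" and B :: "'b set" and R :: "'b \<Rightarrow> 'b \<Rightarrow> real"
  assumes R: "psd_on B R" and Q: "finite Q" "card Q = q" "q > 0"
  shows "psd_on ({u. length u = m \<and> set u \<subseteq> Q} \<times> B) (\<lambda>(u,w) (v,z). E q j u v * R w z)"
proof (induction m arbitrary: j)
  case 0
  show ?case unfolding psd_on_def
  proof (intro allI impI)
    fix A :: "('a list \<times> 'b) set" and c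
    assume A: "finite A" "A \<subseteq> {u. length u = 0 \<and> set u \<subseteq> Q} \<times> B"
    have "(\<Sum>x\<in>A. \<Sum>y\<in>A. c x * c y * (case x of (u, w) \<Rightarrow> \<lambda>(v, z). E q j u v * R w z) y)
      = (if j = 0 then 1 else 0) * (\<Sum>x\<in>A. \<Sum>y\<in>A. c x * c y * R (snd x) (snd y))"
      unfolding sum_distrib_left
      by (intro sum.cong refl) (use A in auto)
    moreover have "0 \<le> (\<Sum>x\<in>A. \<Sum>y\<in>A. c x * c y * R (snd x) (snd y))"
      by (rule psd_comp[OF R A(1)]) (use A in auto)
    ultimately show "0 \<le> (\<Sum>x\<in>A. \<Sum>y\<in>A. c x * c y * (case x of (u, w) \<Rightarrow> \<lambda>(v, z). E q j u v * R w z) y)"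
      by simp
  qed
next
  case (Suc m)
  show ?case unfolding psd_on_def
  proof (intro allI impI)
    fix A :: "('a list \<times> 'b) set" and c
    assume A: "finite A" "A \<subseteq> {u. length u = Suc m \<and> set u \<subseteq> Q} \<times> B"
    define f :: "'a list \<times> 'b \<Rightarrow> 'a list \<times> 'b" where "f = (\<lambda>(u,w). (tl u, w))"
    have fA: "f ` A \<subseteq> {u. length u = m \<and> set u \<subseteq> Q} \<times> B"
      using A by (auto simp: f_def dest!: list.set_sel(2)[rotated] split: prod.splits)
    define K where "K = (\<lambda>j. \<lambda>(u::'a list,w::'b) (v::'a list,z::'b). E q j u v * R w z)"
    have P: "0 \<le> (\<Sum>x\<in>A. \<Sum>y\<in>A. c' x * c' y * K j' (f x) (f y))" for j' c'
      unfolding K_def by (rule psd_comp[OF Suc.IH[of j'] A(1) fA])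
    have "(\<Sum>x\<in>A. \<Sum>y\<in>A. c x * c y * K j x y) \<ge> 0"
    proof (cases j)
      case 0
      have "(\<Sum>x\<in>A. \<Sum>y\<in>A. c x * c y * K j x y) = (\<Sum>x\<in>A. \<Sum>y\<in>A. c x * c y * K j (f x) (f y))"
      proof (intro sum.cong refl)
        fix x y assume xy: "x \<in> A" "y \<in> A"
        obtain u w where x: "x = (u, w)" by (cases x)
        obtain v z where y: "y = (v, z)" by (cases y)
        from xy A x y have u: "u \<noteq> []" by auto
        show "c x * c y * K j x y = c x * c y * K j (f x) (f y)"
          using u unfolding x y K_def f_def 0 by (simp add: E_step[of u])
      qed
      with P show ?thesis by simp
    next
      case (Suc j')
      let ?hh = "\<lambda>e x. c x * h q (hd (fst x)) e"
      have "(\<Sum>x\<in>A. \<Sum>y\<in>A. c x * c y * K j x y) = (\<Sum>x\<in>A. \<Sum>y\<in>A. c x * c y * K j (f x) (f y)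
          + real q * (\<Sum>e\<in>Q. ?hh e x * ?hh e y * K j' (f x) (f y)))"
      proof (intro sum.cong refl)
        fix x y assume xy: "x \<in> A" "y \<in> A"
        obtain u w where x: "x = (u, w)" by (cases x)
        obtain v z where y: "y = (v, z)" by (cases y)
        from xy A x y have u: "u \<noteq> []" "length u = Suc m" "set u \<subseteq> Q" and v: "v \<noteq> []" "length v = Suc m" "set v \<subseteq> Q"
          by auto
        have hu: "hd u \<in> Q" "hd v \<in> Q" using u v by auto
        show "c x * c y * K j x y = c x * c y * K j (f x) (f y)
          + real q * (\<Sum>e\<in>Q. ?hh e x * ?hh e y * K j' (f x) (f y))"
          using u v unfolding x y K_def f_def Suc
          by (simp add: E_step g_feat[OF Q hu] sum_distrib_left sum_distrib_right algebra_simps)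
      qed
      also have "\<dots> = (\<Sum>x\<in>A. \<Sum>y\<in>A. c x * c y * K j (f x) (f y))
          + real q * (\<Sum>e\<in>Q. \<Sum>x\<in>A. \<Sum>y\<in>A. ?hh e x * ?hh e y * K j' (f x) (f y))"
        by (simp add: sum.distrib sum_distrib_left) (simp add: sum.swap[of _ Q])
      also have "\<dots> \<ge> 0"
        by (intro add_nonneg_nonneg mult_nonneg_nonneg sum_nonneg P) auto
      finally show ?thesis .
    qed
    then show "0 \<le> (\<Sum>x\<in>A. \<Sum>y\<in>A. c x * c y * (case x of (u, w) \<Rightarrow> \<lambda>(v, z). E q j u v * R w z) y)"
      by (simp add: K_def)
  qed
qed

fun KM :: "nat \<Rightarrow> nat \<Rightarrow> nat \<Rightarrow> (nat \<Rightarrow> nat) \<Rightarrow> 'a list \<Rightarrow> 'a list \<Rightarrow> real" where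
  "KM q N 0 J x y = 1"
| "KM q N (Suc s) J x y = E q (J 0) (take N x) (take N y) * KM q N s (\<lambda>t. J (Suc t)) (drop N x) (drop N y)"

lemma KM_psd:
  fixes Q :: "'a set" and B :: "'b set" and R :: "'b \<Rightarrow> 'b \<Rightarrow> real"
  assumes R: "psd_on B R" and Q: "finite Q" "card Q = q" "q > 0"
  shows "psd_on ({x. length x = s * N \<and> set x \<subseteq> Q} \<times> B) (\<lambda>(x,w) (y,z). KM q N s J x y * R w z)"
proof (induction s arbitrary: J)
  case 0
  show ?case unfolding psd_on_def
  proof (intro allI impI)
    fix A :: "('a list \<times> 'b) set" and c
    assume A: "finite A" "A \<subseteq> {x. length x = 0 * N \<and> set x \<subseteq> Q} \<times> B"
    have "0 \<le> (\<Sum>x\<in>A. \<Sum>y\<in>A. c x * c y * R (snd x) (snd y))"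
      by (rule psd_comp[OF R A(1)]) (use A in auto)
    then show "0 \<le> (\<Sum>x\<in>A. \<Sum>y\<in>A. c x * c y * (case x of (x, w) \<Rightarrow> \<lambda>(y, z). KM q N 0 J x y * R w z) y)"
      by (simp add: case_prod_beta)
  qed
next
  case (Suc s)
  define R' where "R' = (\<lambda>(x::'a list,w::'b) (y::'a list,z::'b). KM q N s (\<lambda>t. J (Suc t)) x y * R w z)"
  have P: "psd_on ({u. length u = N \<and> set u \<subseteq> Q} \<times> ({x. length x = s * N \<and> set x \<subseteq> Q} \<times> B))
     (\<lambda>(u,p) (v,p'). E q (J 0) u v * R' p p')"
    by (rule E_psd[OF Suc.IH[of "\<lambda>t. J (Suc t)", folded R'_def] Q])
  show ?case unfolding psd_on_def
  proof (intro allI impI)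
    fix A :: "('a list \<times> 'b) set" and c
    assume A: "finite A" "A \<subseteq> {x. length x = Suc s * N \<and> set x \<subseteq> Q} \<times> B"
    define f :: "'a list \<times> 'b \<Rightarrow> 'a list \<times> ('a list \<times> 'b)" where "f = (\<lambda>(x,w). (take N x, (drop N x, w)))"
    have fA: "f ` A \<subseteq> {u. length u = N \<and> set u \<subseteq> Q} \<times> ({x. length x = s * N \<and> set x \<subseteq> Q} \<times> B)"
      using A by (auto simp: f_def dest: in_set_takeD in_set_dropD)
    have "0 \<le> (\<Sum>x\<in>A. \<Sum>y\<in>A. c x * c y * (\<lambda>(u,p) (v,p'). E q (J 0) u v * R' p p') (f x) (f y))"
      by (rule psd_comp[OF P A(1) fA])
    then show "0 \<le> (\<Sum>x\<in>A. \<Sum>y\<in>A. c x * c y * (case x of (x, w) \<Rightarrow> \<lambda>(y, z). KM q N (Suc s) J x y * R w z) y)"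
      by (simp add: f_def R'_def case_prod_beta mult.assoc)
  qed
qed

lemma KM_eq: "length x = s * N \<Longrightarrow> length y = s * N \<Longrightarrow>
  KM q N s J x y = (\<Prod>t<s. krawtchouk q N (J t) (hamming (take N (drop (t*N) x)) (take N (drop (t*N) y))))"
proof (induction s arbitrary: J x y)
  case 0 then show ?case by simp
next
  case (Suc s)
  have "KM q N (Suc s) J x y = krawtchouk q N (J 0) (hamming (take N x) (take N y)) *
     (\<Prod>t<s. krawtchouk q N (J (Suc t)) (hamming (take N (drop (t*N) (drop N x))) (take N (drop (t*N) (drop N y)))))"
    using Suc by (simp add: E_K)
  also have "\<dots> = (\<Prod>t<Suc s. krawtchouk q N (J t) (hamming (take N (drop (t*N) x)) (take N (drop (t*N) y))))"
    by (subst prod.lessThan_Suc_shift) (simp add: add.commute del: prod.lessThan_Suc)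
  finally show ?case .
qed

lemma hamming_blocks: "length x = s * N \<Longrightarrow> length y = s * N \<Longrightarrow>
  hamming x y = (\<Sum>t<s. hamming (take N (drop (t*N) x)) (take N (drop (t*N) y)))"
proof (induction s arbitrary: x y)
  case 0 then show ?case by (simp add: hamming_Nil)
next
  case (Suc s)
  have "hamming x y = hamming (take N x @ drop N x) (take N y @ drop N y)" by simp
  also have "\<dots> = hamming (take N x) (take N y) + hamming (drop N x) (drop N y)"
    using Suc.prems by (intro hamming_append) simp
  also have "\<dots> = (\<Sum>t<Suc s. hamming (take N (drop (t*N) x)) (take N (drop (t*N) y)))"
    using Suc.IH[of "drop N x" "drop N y"] Suc.prems
    by (subst sum.lessThan_Suc_shift) (simp add: add.commute del: sum.lessThan_Suc)
  finally show ?case .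
qed

lemma kraw_zero_nonneg: "q \<ge> 1 \<Longrightarrow> 0 \<le> krawtchouk q N k 0"
  unfolding krawtchouk_def
  by (intro sum_nonneg) (case_tac x, simp_all)

theorem theorem4:
  fixes Q :: "'a set" and C :: "'a list set"
    and q r \<rho> s N n d :: nat
  assumes "q \<ge> 2" "r \<ge> 1" "\<rho> \<ge> 2" "s \<ge> 1"
    and "N = r + \<rho> - 1" "n = s * N"
    and "finite Q" "card Q = q"
    and "C \<subseteq> {x. length x = n \<and> set x \<subseteq> Q}"
    and "min_dist C = d"
    and "\<forall>t<s. min_dist_at_least (proj_block N t C) \<rho>"
  shows "\<forall>f :: (nat \<Rightarrow> nat) \<Rightarrow> real.
           (\<forall>j \<in> multi_idx s N - {\<lambda>_. 0}. f j \<ge> 0) \<longrightarrow>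
           (\<forall>i \<in> T_set s N \<rho> d.
              1 + (\<Sum>j \<in> multi_idx s N - {\<lambda>_. 0}. f j * krawtchouk_multi q N s j i) \<le> 0) \<longrightarrow>
           real (card C) \<le> 1 + (\<Sum>j \<in> multi_idx s N - {\<lambda>_. 0}. f j * krawtchouk_multi q N s j (\<lambda>_. 0))"
proof (intro allI impI)
  fix f :: "(nat \<Rightarrow> nat) \<Rightarrow> real"
  define J0 where "J0 = multi_idx s N - {\<lambda>_. 0}"
  assume fnn: "\<forall>j \<in> multi_idx s N - {\<lambda>_. 0}. f j \<ge> 0"
    and fT: "\<forall>i \<in> T_set s N \<rho> d. 1 + (\<Sum>j \<in> multi_idx s N - {\<lambda>_. 0}. f j * krawtchouk_multi q N s j i) \<le> 0"
  define pat where "pat x y = (\<lambda>t. if t < s then hamming (take N (drop (t*N) x)) (take N (drop (t*N) y)) else 0)"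
    for x y :: "'a list"
  define F where "F = (\<Sum>j\<in>J0. f j * krawtchouk_multi q N s j (\<lambda>_. 0))"
  define G where "G x y = (\<Sum>j\<in>J0. f j * krawtchouk_multi q N s j (pat x y))" for x y
  have q0: "q > 0" "q \<ge> 1" using assms(1) by auto
  have Cfin: "finite C"
    by (rule finite_subset[OF assms(9)]) (use finite_lists_length_eq[OF assms(7), of n] in \<open>simp add: conj_commute\<close>)
  have lenC: "length x = s * N" "set x \<subseteq> Q" if "x \<in> C" for x
    using that assms(6,9) by auto
  have KMeq: "krawtchouk_multi q N s j (pat x y) = KM q N s j x y" if "x \<in> C" "y \<in> C" for j x y
    unfolding krawtchouk_multi_def pat_def KM_eq[OF lenC(1)[OF that(1)] lenC(1)[OF that(2)]]
    by (rule prod.cong) auto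
  have Pj: "0 \<le> (\<Sum>x\<in>C. \<Sum>y\<in>C. krawtchouk_multi q N s j (pat x y))" for j
  proof -
    have "psd_on ({x. length x = s * N \<and> set x \<subseteq> Q} \<times> (UNIV :: unit set)) (\<lambda>(x,w) (y,z). KM q N s j x y * (\<lambda>_ _. 1) w z)"
      by (rule KM_psd[OF psd_const assms(7,8) q0(1)])
    from psd_comp[OF this Cfin, of "\<lambda>x. (x, ())" "\<lambda>_. 1"]
    have "0 \<le> (\<Sum>x\<in>C. \<Sum>y\<in>C. KM q N s j x y)" using lenC by auto
    also have "\<dots> = (\<Sum>x\<in>C. \<Sum>y\<in>C. krawtchouk_multi q N s j (pat x y))"
      using KMeq by (intro sum.cong refl) auto
    finally show ?thesis .
  qed
  have Fnn: "F \<ge> 0"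
    unfolding F_def krawtchouk_multi_def using fnn J0_def
    by (intro sum_nonneg mult_nonneg_nonneg prod_nonneg kraw_zero_nonneg q0) auto
  have "0 \<le> (\<Sum>j\<in>J0. f j * (\<Sum>x\<in>C. \<Sum>y\<in>C. krawtchouk_multi q N s j (pat x y)))"
    by (rule sum_nonneg, rule mult_nonneg_nonneg) (use fnn Pj J0_def in auto)
  also have "\<dots> = (\<Sum>x\<in>C. \<Sum>y\<in>C. G x y)"
    unfolding G_def sum_distrib_left
    by (subst sum.swap) (subst (2) sum.swap, rule refl)
  finally have S0: "0 \<le> (\<Sum>x\<in>C. \<Sum>y\<in>C. G x y)" .
  have Gxx: "G x x = F" for x
  proof -
    have "pat x x = (\<lambda>_. 0)" by (rule ext) (simp add: pat_def hamming_self)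
    then show ?thesis by (simp add: G_def F_def)
  qed
  have patT: "pat x y \<in> T_set s N \<rho> d" if xy: "x \<in> C" "y \<in> C" "x \<noteq> y" for x y
  proof -
    have "pat x y \<in> multi_idx s N"
      unfolding multi_idx_def pat_def
      using hamming_le[of "take N (drop (_ * N) x)"] by (auto intro: order.trans)
    moreover have "d \<le> (\<Sum>t<s. pat x y t)"
    proof -
      have fin: "finite {hamming x y | x y. x \<in> C \<and> y \<in> C \<and> x \<noteq> y}"
        by (rule finite_subset[of _ "(\<lambda>(x,y). hamming x y) ` (C \<times> C)"]) (use Cfin in auto)
      have "d \<le> hamming x y"
        unfolding assms(10)[symmetric] min_dist_def using xy by (intro Min_le[OF fin]) auto
      also have "\<dots> = (\<Sum>t<s. pat x y t)"
        unfolding hamming_blocks[OF lenC(1)[OF xy(1)] lenC(1)[OF xy(2)]] pat_def by simp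
      finally show ?thesis .
    qed
    moreover have "\<forall>t<s. pat x y t = 0 \<or> \<rho> \<le> pat x y t"
    proof (intro allI impI)
      fix t assume t: "t < s"
      show "pat x y t = 0 \<or> \<rho> \<le> pat x y t"
      proof (cases "take N (drop (t*N) x) = take N (drop (t*N) y)")
        case True then show ?thesis by (simp add: pat_def hamming_self)
      next
        case False
        have "take N (drop (t*N) x) \<in> proj_block N t C" "take N (drop (t*N) y) \<in> proj_block N t C"
          using xy unfolding proj_block_def by auto
        with False assms(11) t show ?thesis unfolding min_dist_at_least_def pat_def by auto
      qed
    qed
    ultimately show ?thesis unfolding T_set_def by auto
  qed
  have Gxy: "G x y \<le> -1" if "x \<in> C" "y \<in> C" "x \<noteq> y" for x y
    using fT patT[OF that] unfolding G_def J0_def by fastforce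
  define M where "M = card C"
  have "(\<Sum>x\<in>C. \<Sum>y\<in>C. G x y) = (\<Sum>x\<in>C. G x x + (\<Sum>y\<in>C - {x}. G x y))"
    using Cfin by (intro sum.cong refl) (simp add: sum.remove)
  also have "\<dots> \<le> (\<Sum>x\<in>C. F + (\<Sum>y\<in>C - {x}. -1))"
    using Gxx Gxy by (intro sum_mono add_mono) auto
  also have "\<dots> = (\<Sum>x\<in>C. F - (real M - 1))"
  proof (intro sum.cong refl)
    fix x assume "x \<in> C"
    then have "card C \<ge> 1" "card (C - {x}) = card C - 1" using Cfin
      by (auto simp: Suc_le_eq card_gt_0_iff)
    then show "F + (\<Sum>y\<in>C - {x}. -1) = F - (real M - 1)" by (simp add: M_def of_nat_diff)
  qed
  also have "\<dots> = real M * (F - (real M - 1))"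
    using Cfin by (simp add: M_def card_Diff_singleton algebra_simps of_nat_diff card_gt_0_iff)
  finally have "0 \<le> real M * (F - (real M - 1))" using S0 by linarith
  then have "real M \<le> 1 + F"
    using Fnn by (cases "M = 0") (auto simp: zero_le_mult_iff)
  then show "real (card C) \<le> 1 + (\<Sum>j \<in> multi_idx s N - {\<lambda>_. 0}. f j * krawtchouk_multi q N s j (\<lambda>_. 0))"
    unfolding M_def F_def J0_def .
qed

end
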